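(* Let $\mathcal{G}$ be any Fischer space, let $\ell=\{a,b,c\}$ be a line of $\mathcal{G}$ and let $\mathcal{P}_0$ be the set of points not on $\ell$ and not collinear with any of $a,b,c$. If $v,w\in\mathcal{P}_0$ with $v\sim w$, then $v\wedge w\in\mathcal{P}_0$.
   Context: A 3-transposition group is a pair $(G,D)$ where $D$ is a conjugacy class of involutions generating $G$ with $de$ of order at most $3$ for all $d,e\in D$. Its Fischer space has point set $D$ and as lines the $3$-subsets consisting of the three involutions of a subgroup isomorphic to $\mathrm{Sym}(3)$. Distinct points on a common line are collinear ($p\sim q$), and $p\wedge q$ is the third point of that line. *)

theory Defs
  imports "HOL-Algebra.Sym_Groups" "HOL-Algebra.Generated_Groups"
begin

definition three_transposition_group :: "('a, 'b) monoid_scheme \<Rightarrow> 'a set \<Rightarrow> bool" where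
  "three_transposition_group G D \<longleftrightarrow>
     group G \<and> D \<subseteq> carrier G \<and>
     (\<exists>d \<in> carrier G. D = {inv\<^bsub>G\<^esub> g \<otimes>\<^bsub>G\<^esub> d \<otimes>\<^bsub>G\<^esub> g | g. g \<in> carrier G}) \<and>
     (\<forall>d \<in> D. d \<noteq> \<one>\<^bsub>G\<^esub> \<and> d \<otimes>\<^bsub>G\<^esub> d = \<one>\<^bsub>G\<^esub>) \<and>
     generate G D = carrier G \<and>
     (\<forall>d \<in> D. \<forall>e \<in> D. \<exists>n::nat. 1 \<le> n \<and> n \<le> 3 \<and> (d \<otimes>\<^bsub>G\<^esub> e) [^]\<^bsub>G\<^esub> n = \<one>\<^bsub>G\<^esub>)"

definition involutions_in :: "('a, 'b) monoid_scheme \<Rightarrow> 'a set \<Rightarrow> 'a set" where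
  "involutions_in G H = {x \<in> H. x \<noteq> \<one>\<^bsub>G\<^esub> \<and> x \<otimes>\<^bsub>G\<^esub> x = \<one>\<^bsub>G\<^esub>}"

definition fischer_line :: "('a, 'b) monoid_scheme \<Rightarrow> 'a set \<Rightarrow> 'a set \<Rightarrow> bool" where
  "fischer_line G D L \<longleftrightarrow> L \<subseteq> D \<and> card L = 3 \<and>
     (\<exists>H. subgroup H G \<and> G\<lparr>carrier := H\<rparr> \<cong> sym_group 3 \<and> L = involutions_in G H)"

definition fischer_collinear :: "('a, 'b) monoid_scheme \<Rightarrow> 'a set \<Rightarrow> 'a \<Rightarrow> 'a \<Rightarrow> bool" where
  "fischer_collinear G D p q \<longleftrightarrow> p \<noteq> q \<and> (\<exists>L. fischer_line G D L \<and> p \<in> L \<and> q \<in> L)"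

definition fischer_wedge :: "('a, 'b) monoid_scheme \<Rightarrow> 'a set \<Rightarrow> 'a \<Rightarrow> 'a \<Rightarrow> 'a" where
  "fischer_wedge G D p q =
     (THE r. r \<noteq> p \<and> r \<noteq> q \<and> (\<exists>L. fischer_line G D L \<and> L = {p, q, r}))"

end

theory Submission
  imports Defs
begin


definition P3 :: "nat \<Rightarrow> nat \<Rightarrow> nat \<Rightarrow> nat \<Rightarrow> nat" where
  "P3 a b c = (\<lambda>x. if x = 1 then a else if x = 2 then b else if x = 3 then c else x)"

lemma P3_app [simp]: "P3 a b c (1::nat) = a" "P3 a b c 2 = b" "P3 a b c 3 = c" "P3 a b c (Suc 0) = a"
  by (simp_all add: P3_def)

lemma P3_comp [simp]: "P3 a b c \<circ> P3 a' b' c' = P3 (P3 a b c a') (P3 a b c b') (P3 a b c c')"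
  by (auto simp: P3_def fun_eq_iff)

lemma P3_eq [simp]: "P3 a b c = P3 a' b' c' \<longleftrightarrow> a = a' \<and> b = b' \<and> c = c'"
proof
  assume "P3 a b c = P3 a' b' c'"
  then have "P3 a b c 1 = P3 a' b' c' 1" "P3 a b c 2 = P3 a' b' c' 2" "P3 a b c 3 = P3 a' b' c' 3"
    by simp_all
  then show "a = a' \<and> b = b' \<and> c = c'" by simp
qed simp

lemma P3_id: "id = P3 1 2 3"
  by (auto simp: P3_def fun_eq_iff)

lemma perm3_vals:
  assumes "a \<in> {1,2,3::nat}" "b \<in> {1,2,3::nat}" "c \<in> {1,2,3::nat}" "a \<noteq> b" "a \<noteq> c" "b \<noteq> c"
  shows "P3 a b c \<in> {P3 1 2 3, P3 2 1 3, P3 1 3 2, P3 2 3 1, P3 3 1 2, P3 3 2 1}"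
  using assms by auto

lemma set123: "{1..3::nat} = {1,2,3}" by (auto simp: numeral_3_eq_3)

lemma perm3_cases:
  assumes "\<sigma> permutes {1..3::nat}"
  shows "\<sigma> \<in> {P3 1 2 3, P3 2 1 3, P3 1 3 2, P3 2 3 1, P3 3 1 2, P3 3 2 1}"
proof -
  have e: "\<sigma> = P3 (\<sigma> 1) (\<sigma> 2) (\<sigma> 3)"
    using permutes_not_in[OF assms] by (auto simp: P3_def fun_eq_iff)
  have r: "\<sigma> i \<in> {1,2,3}" if "i \<in> {1,2,3}" for i
    using permutes_in_image[OF assms, of i] that unfolding set123 by blast
  have i: "inj \<sigma>" by (rule permutes_inj[OF assms])
  have d1: "\<sigma> 1 \<noteq> \<sigma> 2"
  proof
    assume "\<sigma> 1 = \<sigma> 2"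
    then have "(1::nat) = 2" by (rule injD[OF i])
    then show False by simp
  qed
  have d2: "\<sigma> 1 \<noteq> \<sigma> 3"
  proof
    assume "\<sigma> 1 = \<sigma> 3"
    then have "(1::nat) = 3" by (rule injD[OF i])
    then show False by simp
  qed
  have d3: "\<sigma> 2 \<noteq> \<sigma> 3"
  proof
    assume "\<sigma> 2 = \<sigma> 3"
    then have "(2::nat) = 3" by (rule injD[OF i])
    then show False by simp
  qed
  have "P3 (\<sigma> 1) (\<sigma> 2) (\<sigma> 3) \<in> {P3 1 2 3, P3 2 1 3, P3 1 3 2, P3 2 3 1, P3 3 1 2, P3 3 2 1}"
    by (rule perm3_vals[OF r r r d1 d2 d3]) simp_all
  then show ?thesis by (subst e)
qed

lemma perm3_in:
  "P3 1 2 3 permutes {1..3::nat}" "P3 2 1 3 permutes {1..3::nat}" "P3 1 3 2 permutes {1..3::nat}"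
  "P3 2 3 1 permutes {1..3::nat}" "P3 3 1 2 permutes {1..3::nat}" "P3 3 2 1 permutes {1..3::nat}"
proof -
  have t1: "P3 2 1 3 = Transposition.transpose 1 2"
    by (auto simp: P3_def fun_eq_iff transpose_def)
  have t2: "P3 1 3 2 = Transposition.transpose 2 3"
    by (auto simp: P3_def fun_eq_iff transpose_def)
  have t3: "P3 3 2 1 = Transposition.transpose 1 3"
    by (auto simp: P3_def fun_eq_iff transpose_def)
  show a: "P3 2 1 3 permutes {1..3::nat}" unfolding t1 by (rule permutes_swap_id) auto
  show b: "P3 1 3 2 permutes {1..3::nat}" unfolding t2 by (rule permutes_swap_id) auto
  show "P3 3 2 1 permutes {1..3::nat}" unfolding t3 by (rule permutes_swap_id) auto
  show "P3 1 2 3 permutes {1..3::nat}" using permutes_id P3_id by metis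
  have "P3 2 1 3 \<circ> P3 1 3 2 permutes {1..3::nat}" by (rule permutes_compose[OF b a])
  then show "P3 2 3 1 permutes {1..3::nat}" by simp
  have "P3 1 3 2 \<circ> P3 2 1 3 permutes {1..3::nat}" by (rule permutes_compose[OF a b])
  then show "P3 3 1 2 permutes {1..3::nat}" by simp
qed

lemma sym3_carrier: "carrier (sym_group 3) = {P3 1 2 3, P3 2 1 3, P3 1 3 2, P3 2 3 1, P3 3 1 2, P3 3 2 1}"
proof -
  have "x \<in> {P3 1 2 3, P3 2 1 3, P3 1 3 2, P3 2 3 1, P3 3 1 2, P3 3 2 1}" if "x \<in> carrier (sym_group 3)" for x
    using that unfolding sym_group_carrier by (rule perm3_cases)
  moreover have "x \<in> carrier (sym_group 3)" if "x \<in> {P3 1 2 3, P3 2 1 3, P3 1 3 2, P3 2 3 1, P3 3 1 2, P3 3 2 1}" for x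
    using that unfolding sym_group_carrier
    apply (elim insertE)
    using perm3_in by simp_all
  ultimately show ?thesis by (intro subset_antisym subsetI)
qed




context group begin

lemma s3_braid:
  assumes p: "p \<in> carrier G" and q: "q \<in> carrier G" and pp: "p \<otimes> p = \<one>" and qq: "q \<otimes> q = \<one>"
    and o3: "p \<otimes> q \<otimes> (p \<otimes> q) \<otimes> (p \<otimes> q) = \<one>"
  shows "q \<otimes> p \<otimes> q = p \<otimes> q \<otimes> p"
proof -
  have ppx: "p \<otimes> (p \<otimes> x) = x" if "x \<in> carrier G" for x
    using that p pp by (simp flip: m_assoc)
  have qqx: "q \<otimes> (q \<otimes> x) = x" if "x \<in> carrier G" for x
    using that q qq by (simp flip: m_assoc)
  have "q \<otimes> p \<otimes> q = (p \<otimes> q \<otimes> p) \<otimes> (p \<otimes> q \<otimes> (p \<otimes> q) \<otimes> (p \<otimes> q))"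
    using p q by (simp add: m_assoc ppx qqx)
  also have "\<dots> = p \<otimes> q \<otimes> p" using o3 p q by simp
  finally show ?thesis .
qed

lemma s3_distinct:
  assumes p: "p \<in> carrier G" and q: "q \<in> carrier G" and pp: "p \<otimes> p = \<one>" and qq: "q \<otimes> q = \<one>"
    and p1: "p \<noteq> \<one>" and q1: "q \<noteq> \<one>" and nc: "p \<otimes> q \<noteq> q \<otimes> p"
    and br: "q \<otimes> p \<otimes> q = p \<otimes> q \<otimes> p"
  shows "distinct [\<one>, p, q, p \<otimes> q, q \<otimes> p, p \<otimes> q \<otimes> p]"
proof -
  have ppx: "p \<otimes> (p \<otimes> x) = x" if "x \<in> carrier G" for x
    using that p pp by (simp flip: m_assoc)
  have qqx: "q \<otimes> (q \<otimes> x) = x" if "x \<in> carrier G" for x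
    using that q qq by (simp flip: m_assoc)
  have br': "q \<otimes> (p \<otimes> q) = p \<otimes> (q \<otimes> p)" using br p q by (simp add: m_assoc)
  have pq: "p \<noteq> q" using nc by auto
  have a: "\<one> \<noteq> p \<otimes> q"
  proof
    assume "\<one> = p \<otimes> q"
    then have "p \<otimes> \<one> = p \<otimes> (p \<otimes> q)" by simp
    then show False using ppx p q pq by simp
  qed
  have b: "\<one> \<noteq> q \<otimes> p"
  proof
    assume "\<one> = q \<otimes> p"
    then have "q \<otimes> \<one> = q \<otimes> (q \<otimes> p)" by simp
    then show False using qqx p q pq by simp
  qed
  have c: "\<one> \<noteq> p \<otimes> (q \<otimes> p)"
  proof
    assume "\<one> = p \<otimes> (q \<otimes> p)"
    then have "p \<otimes> \<one> = p \<otimes> (p \<otimes> (q \<otimes> p))" by simp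
    then have "\<one> \<otimes> p = q \<otimes> p" using ppx p q by simp
    then show False using p q q1 by (metis right_cancel one_closed)
  qed
  have d: "q \<noteq> p \<otimes> (q \<otimes> p)"
  proof
    assume "q = p \<otimes> (q \<otimes> p)"
    then have "q \<otimes> q = q \<otimes> (q \<otimes> (p \<otimes> q))" using br' by simp
    then show False using qqx qq p q a by simp
  qed
  show ?thesis using p q p1 q1 nc pq a b c d br' ppx qqx
    apply (simp add: m_assoc)
    done
qed

end


definition psi3 :: "('a, 'b) monoid_scheme \<Rightarrow> 'a \<Rightarrow> 'a \<Rightarrow> (nat \<Rightarrow> nat) \<Rightarrow> 'a" where
  "psi3 G p q \<sigma> = (if \<sigma> = P3 1 2 3 then \<one>\<^bsub>G\<^esub> else if \<sigma> = P3 2 1 3 then p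
     else if \<sigma> = P3 1 3 2 then q else if \<sigma> = P3 2 3 1 then p \<otimes>\<^bsub>G\<^esub> q
     else if \<sigma> = P3 3 1 2 then q \<otimes>\<^bsub>G\<^esub> p else p \<otimes>\<^bsub>G\<^esub> q \<otimes>\<^bsub>G\<^esub> p)"

lemma psi3_vals [simp]:
  "psi3 G p q (P3 1 2 3) = \<one>\<^bsub>G\<^esub>" "psi3 G p q (P3 2 1 3) = p" "psi3 G p q (P3 1 3 2) = q"
  "psi3 G p q (P3 2 3 1) = p \<otimes>\<^bsub>G\<^esub> q" "psi3 G p q (P3 3 1 2) = q \<otimes>\<^bsub>G\<^esub> p"
  "psi3 G p q (P3 3 2 1) = p \<otimes>\<^bsub>G\<^esub> q \<otimes>\<^bsub>G\<^esub> p"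
  by (simp_all add: psi3_def)

lemma psi3_vals' [simp]:
  "psi3 G p q (P3 (Suc 0) 2 3) = \<one>\<^bsub>G\<^esub>" "psi3 G p q (P3 2 (Suc 0) 3) = p" "psi3 G p q (P3 (Suc 0) 3 2) = q"
  "psi3 G p q (P3 2 3 (Suc 0)) = p \<otimes>\<^bsub>G\<^esub> q" "psi3 G p q (P3 3 (Suc 0) 2) = q \<otimes>\<^bsub>G\<^esub> p"
  "psi3 G p q (P3 3 2 (Suc 0)) = p \<otimes>\<^bsub>G\<^esub> q \<otimes>\<^bsub>G\<^esub> p"
  by (simp_all add: psi3_def)

context group begin

lemma s3_subgroup:
  assumes p: "p \<in> carrier G" and q: "q \<in> carrier G" and pp: "p \<otimes> p = \<one>" and qq: "q \<otimes> q = \<one>"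
    and p1: "p \<noteq> \<one>" and q1: "q \<noteq> \<one>" and nc: "p \<otimes> q \<noteq> q \<otimes> p"
    and o3: "p \<otimes> q \<otimes> (p \<otimes> q) \<otimes> (p \<otimes> q) = \<one>"
  shows "subgroup {\<one>, p, q, p \<otimes> q, q \<otimes> p, p \<otimes> q \<otimes> p} G \<and>
         G\<lparr>carrier := {\<one>, p, q, p \<otimes> q, q \<otimes> p, p \<otimes> q \<otimes> p}\<rparr> \<cong> sym_group 3"
proof -
  define H where "H = {\<one>, p, q, p \<otimes> q, q \<otimes> p, p \<otimes> q \<otimes> p}"
  have br: "q \<otimes> p \<otimes> q = p \<otimes> q \<otimes> p" by (rule s3_braid[OF p q pp qq o3])
  have dist: "distinct [\<one>, p, q, p \<otimes> q, q \<otimes> p, p \<otimes> q \<otimes> p]"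
    by (rule s3_distinct[OF p q pp qq p1 q1 nc br])
  have ppx: "p \<otimes> (p \<otimes> x) = x" if "x \<in> carrier G" for x
    using that p pp by (simp flip: m_assoc)
  have qqx: "q \<otimes> (q \<otimes> x) = x" if "x \<in> carrier G" for x
    using that q qq by (simp flip: m_assoc)
  have br': "q \<otimes> (p \<otimes> q) = p \<otimes> (q \<otimes> p)" using br p q by (simp add: m_assoc)
  have brx: "q \<otimes> (p \<otimes> (q \<otimes> x)) = p \<otimes> (q \<otimes> (p \<otimes> x))" if "x \<in> carrier G" for x
    using that br p q by (simp flip: m_assoc)
  have hom: "psi3 G p q \<in> hom (sym_group 3) G"
  proof (rule homI)
    show "psi3 G p q x \<in> carrier G" if "x \<in> carrier (sym_group 3)" for x
      using that p q unfolding sym3_carrier by (elim insertE emptyE) simp_all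
    show "psi3 G p q (x \<otimes>\<^bsub>sym_group 3\<^esub> y) = psi3 G p q x \<otimes> psi3 G p q y"
      if "x \<in> carrier (sym_group 3)" "y \<in> carrier (sym_group 3)" for x y
      using that unfolding sym3_carrier sym_group_mult
      by (elim insertE emptyE; simp add: p q m_assoc ppx qqx br' brx pp qq)
  qed
  have img: "psi3 G p q ` carrier (sym_group 3) = H"
    unfolding sym3_carrier H_def by simp
  have gh: "group_hom (sym_group 3) G (psi3 G p q)"
    using hom sym_group_is_group is_group by (simp add: group_hom_def group_hom_axioms_def)
  have sub: "subgroup H G" using group_hom.img_is_subgroup[OF gh] img by simp
  have inj: "inj_on (psi3 G p q) (carrier (sym_group 3))"
  proof (rule inj_onI)
    fix x y assume "x \<in> carrier (sym_group 3)" "y \<in> carrier (sym_group 3)" "psi3 G p q x = psi3 G p q y"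
    then show "x = y" using dist unfolding sym3_carrier
      by (elim insertE emptyE; simp)
  qed
  have "psi3 G p q \<in> iso (sym_group 3) (G\<lparr>carrier := H\<rparr>)"
  proof (rule isoI)
    show "psi3 G p q \<in> hom (sym_group 3) (G\<lparr>carrier := H\<rparr>)"
      using hom img by (auto simp: hom_def)
    show "bij_betw (psi3 G p q) (carrier (sym_group 3)) (carrier (G\<lparr>carrier := H\<rparr>))"
      using inj img by (simp add: bij_betw_def)
  qed
  then have "sym_group 3 \<cong> G\<lparr>carrier := H\<rparr>" by (rule is_isoI)
  then have "G\<lparr>carrier := H\<rparr> \<cong> sym_group 3"
    by (rule group.iso_sym[OF sym_group_is_group])
  then show ?thesis using sub unfolding H_def by simp
qed

end


lemma perm3_noncomm:
  assumes "x \<in> carrier (sym_group 3)" "y \<in> carrier (sym_group 3)" "x \<circ> x = id" "y \<circ> y = id"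
    "x \<noteq> id" "y \<noteq> id" "x \<noteq> y"
  shows "x \<circ> y \<noteq> y \<circ> x"
  using assms unfolding sym3_carrier P3_id by auto

context group begin

lemma sym3_noncomm:
  assumes sub: "subgroup H G" and iso: "G\<lparr>carrier := H\<rparr> \<cong> sym_group 3"
    and pH: "p \<in> H" and qH: "q \<in> H" and pq: "p \<noteq> q"
    and pp: "p \<otimes> p = \<one>" and qq: "q \<otimes> q = \<one>" and p1: "p \<noteq> \<one>" and q1: "q \<noteq> \<one>"
  shows "p \<otimes> q \<noteq> q \<otimes> p"
proof
  assume c: "p \<otimes> q = q \<otimes> p"
  obtain h where h: "h \<in> iso (G\<lparr>carrier := H\<rparr>) (sym_group 3)"
    using iso unfolding is_iso_def by blast
  have hh: "h \<in> hom (G\<lparr>carrier := H\<rparr>) (sym_group 3)" and inj: "inj_on h H"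
    using h by (auto simp: iso_def bij_betw_def)
  have gH: "group (G\<lparr>carrier := H\<rparr>)" by (rule subgroup.subgroup_is_group[OF sub is_group])
  have h1: "h \<one> = id"
    using hom_one[OF hh gH sym_group_is_group] by (simp add: sym_group_one)
  have oneH: "\<one> \<in> H" using sub by (rule subgroup.one_closed)
  have hm: "h (x \<otimes> y) = h x \<circ> h y" if "x \<in> H" "y \<in> H" for x y
    using hom_mult[OF hh, of x y] that by (simp add: sym_group_mult)
  have hc: "h x \<in> carrier (sym_group 3)" if "x \<in> H" for x
    using hom_in_carrier[OF hh, of x] that by simp
  have "h p \<circ> h p = id" using hm[OF pH pH] pp h1 by simp
  moreover have "h q \<circ> h q = id" using hm[OF qH qH] qq h1 by simp
  moreover have "h p \<noteq> id" using inj pH oneH p1 h1 by (metis inj_on_def)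
  moreover have "h q \<noteq> id" using inj qH oneH q1 h1 by (metis inj_on_def)
  moreover have "h p \<noteq> h q" using inj pH qH pq by (metis inj_on_def)
  moreover have "h p \<circ> h q = h q \<circ> h p" using hm[OF pH qH] hm[OF qH pH] c by simp
  ultimately show False using perm3_noncomm[OF hc[OF pH] hc[OF qH]] by blast
qed

end

context group begin

lemma inv_facts:
  assumes v: "v \<in> carrier G" and w: "w \<in> carrier G" and vv: "v \<otimes> v = \<one>" and ww: "w \<otimes> w = \<one>"
  shows "v \<otimes> w \<otimes> v \<otimes> (v \<otimes> w \<otimes> v) = \<one>"
    and "v \<otimes> w \<otimes> v = \<one> \<Longrightarrow> w = \<one>"
    and "v \<otimes> w \<otimes> v = v \<Longrightarrow> w = v"
    and "v \<otimes> w \<otimes> v = w \<Longrightarrow> v \<otimes> w = w \<otimes> v"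
    and "v \<otimes> w \<otimes> (v \<otimes> w) = \<one> \<Longrightarrow> v \<otimes> w = w \<otimes> v"
    and "v \<otimes> w = \<one> \<Longrightarrow> w = v"
    and "inv v = v"
proof -
  have vvx: "v \<otimes> (v \<otimes> x) = x" if "x \<in> carrier G" for x
    using that v vv by (simp flip: m_assoc)
  have wwx: "w \<otimes> (w \<otimes> x) = x" if "x \<in> carrier G" for x
    using that w ww by (simp flip: m_assoc)
  show "v \<otimes> w \<otimes> v \<otimes> (v \<otimes> w \<otimes> v) = \<one>" using v w vv ww by (simp add: m_assoc vvx wwx)
  show "v \<otimes> w \<otimes> v = \<one> \<Longrightarrow> w = \<one>"
  proof -
    assume "v \<otimes> w \<otimes> v = \<one>"
    then have "v \<otimes> (v \<otimes> w \<otimes> v) \<otimes> v = v \<otimes> \<one> \<otimes> v" by simp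
    then show "w = \<one>" using v w vv by (simp add: m_assoc vvx)
  qed
  show "v \<otimes> w \<otimes> v = v \<Longrightarrow> w = v"
  proof -
    assume "v \<otimes> w \<otimes> v = v"
    then have "v \<otimes> (v \<otimes> w \<otimes> v) \<otimes> v = v \<otimes> v \<otimes> v" by simp
    then show "w = v" using v w vv by (simp add: m_assoc vvx)
  qed
  show "v \<otimes> w \<otimes> v = w \<Longrightarrow> v \<otimes> w = w \<otimes> v"
  proof -
    assume "v \<otimes> w \<otimes> v = w"
    then have "v \<otimes> w \<otimes> v \<otimes> v = w \<otimes> v" by simp
    then show "v \<otimes> w = w \<otimes> v" using v w vv by (simp add: m_assoc)
  qed
  show "v \<otimes> w \<otimes> (v \<otimes> w) = \<one> \<Longrightarrow> v \<otimes> w = w \<otimes> v"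
  proof -
    assume "v \<otimes> w \<otimes> (v \<otimes> w) = \<one>"
    then have "w \<otimes> (v \<otimes> (v \<otimes> w \<otimes> (v \<otimes> w))) = w \<otimes> (v \<otimes> \<one>)" by simp
    then show "v \<otimes> w = w \<otimes> v" using v w vv by (simp add: m_assoc vvx wwx)
  qed
  show "v \<otimes> w = \<one> \<Longrightarrow> w = v"
  proof -
    assume "v \<otimes> w = \<one>"
    then have "v \<otimes> (v \<otimes> w) = v \<otimes> \<one>" by simp
    then show "w = v" using v w by (simp add: vvx)
  qed
  show "inv v = v" using v vv by (simp add: inv_equality)
qed

end

lemma ttg_basic:
  assumes "three_transposition_group G D" "d \<in> D"
  shows "group G" "d \<in> carrier G" "d \<noteq> \<one>\<^bsub>G\<^esub>" "d \<otimes>\<^bsub>G\<^esub> d = \<one>\<^bsub>G\<^esub>"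
  using assms unfolding three_transposition_group_def by auto

context group begin

lemma line_facts:
  assumes T: "three_transposition_group G D" and L: "fischer_line G D L"
    and vL: "v \<in> L" and wL: "w \<in> L" and vw: "v \<noteq> w"
  shows "v \<otimes>\<^bsub>G\<^esub> w \<noteq> w \<otimes>\<^bsub>G\<^esub> v" "v \<otimes>\<^bsub>G\<^esub> w \<otimes>\<^bsub>G\<^esub> v \<in> L"
    "v \<otimes>\<^bsub>G\<^esub> w \<otimes>\<^bsub>G\<^esub> v \<noteq> v" "v \<otimes>\<^bsub>G\<^esub> w \<otimes>\<^bsub>G\<^esub> v \<noteq> w" "L \<subseteq> D" "card L = 3"
proof -
  obtain H where LD: "L \<subseteq> D" and c3: "card L = 3" and sub: "subgroup H G"
    and iso: "G\<lparr>carrier := H\<rparr> \<cong> sym_group 3" and Li: "L = involutions_in G H"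
    using L unfolding fischer_line_def by blast
  have vD: "v \<in> D" and wD: "w \<in> D" using vL wL LD by auto
  note bv = ttg_basic[OF T vD] and bw = ttg_basic[OF T wD]
  have vH: "v \<in> H" and wH: "w \<in> H" using vL wL Li by (auto simp: involutions_in_def)
  show nc: "v \<otimes> w \<noteq> w \<otimes> v"
    by (rule sym3_noncomm[OF sub iso vH wH vw bv(4) bw(4) bv(3) bw(3)])
  note f = inv_facts[OF bv(2) bw(2) bv(4) bw(4)]
  have "v \<otimes> w \<otimes> v \<in> H" using vH wH sub by (simp add: subgroup.m_closed)
  then show "v \<otimes> w \<otimes> v \<in> L" using Li f(1) f(2) bw(3) by (auto simp: involutions_in_def)
  show "v \<otimes> w \<otimes> v \<noteq> v" using f(3) vw by auto
  show "v \<otimes> w \<otimes> v \<noteq> w" using f(4) nc by auto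
  show "L \<subseteq> D" "card L = 3" using LD c3 by auto
qed


lemma line_eq:
  assumes T: "three_transposition_group G D" and L: "fischer_line G D L"
    and vL: "v \<in> L" and wL: "w \<in> L" and vw: "v \<noteq> w"
  shows "L = {v, w, v \<otimes>\<^bsub>G\<^esub> w \<otimes>\<^bsub>G\<^esub> v}"
proof -
  note f = line_facts[OF T L vL wL vw]
  have sub: "{v, w, v \<otimes>\<^bsub>G\<^esub> w \<otimes>\<^bsub>G\<^esub> v} \<subseteq> L" using vL wL f(2) by auto
  have c: "card {v, w, v \<otimes>\<^bsub>G\<^esub> w \<otimes>\<^bsub>G\<^esub> v} = 3" using vw f(3) f(4) by auto
  have fin: "finite L" using f(6) by (metis card.infinite zero_neq_numeral)
  show ?thesis using card_subset_eq[OF fin sub] c f(6) by simp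
qed

lemma wedge_eq:
  assumes T: "three_transposition_group G D" and col: "fischer_collinear G D v w"
  shows "fischer_wedge G D v w = v \<otimes>\<^bsub>G\<^esub> w \<otimes>\<^bsub>G\<^esub> v"
    "v \<otimes>\<^bsub>G\<^esub> w \<otimes>\<^bsub>G\<^esub> v \<in> D"
proof -
  obtain L where vw: "v \<noteq> w" and L: "fischer_line G D L" and vL: "v \<in> L" and wL: "w \<in> L"
    using col unfolding fischer_collinear_def by blast
  note f = line_facts[OF T L vL wL vw]
  show "v \<otimes>\<^bsub>G\<^esub> w \<otimes>\<^bsub>G\<^esub> v \<in> D" using f(2) f(5) by auto
  show "fischer_wedge G D v w = v \<otimes>\<^bsub>G\<^esub> w \<otimes>\<^bsub>G\<^esub> v"
    unfolding fischer_wedge_def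
  proof (rule the_equality)
    show "v \<otimes>\<^bsub>G\<^esub> w \<otimes>\<^bsub>G\<^esub> v \<noteq> v \<and> v \<otimes>\<^bsub>G\<^esub> w \<otimes>\<^bsub>G\<^esub> v \<noteq> w \<and>
      (\<exists>L. fischer_line G D L \<and> L = {v, w, v \<otimes>\<^bsub>G\<^esub> w \<otimes>\<^bsub>G\<^esub> v})"
      using f(3,4) L line_eq[OF T L vL wL vw] by blast
    fix r assume r: "r \<noteq> v \<and> r \<noteq> w \<and> (\<exists>L. fischer_line G D L \<and> L = {v, w, r})"
    then obtain L' where L': "fischer_line G D L'" "L' = {v, w, r}" by blast
    have "v \<otimes>\<^bsub>G\<^esub> w \<otimes>\<^bsub>G\<^esub> v \<in> L'"
      using line_facts(2)[OF T L'(1) _ _ vw] L'(2) by auto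
    then show "r = v \<otimes>\<^bsub>G\<^esub> w \<otimes>\<^bsub>G\<^esub> v" using L'(2) f(3,4) by auto
  qed
qed

lemma noncol_comm:
  assumes T: "three_transposition_group G D" and pD: "p \<in> D" and qD: "q \<in> D" and pq: "p \<noteq> q"
    and nc: "\<not> fischer_collinear G D p q"
  shows "p \<otimes>\<^bsub>G\<^esub> q = q \<otimes>\<^bsub>G\<^esub> p"
proof (rule ccontr)
  assume ncm: "p \<otimes>\<^bsub>G\<^esub> q \<noteq> q \<otimes>\<^bsub>G\<^esub> p"
  note bp = ttg_basic[OF T pD] and bq = ttg_basic[OF T qD]
  note f = inv_facts[OF bp(2) bq(2) bp(4) bq(4)]
  note f' = inv_facts[OF bq(2) bp(2) bq(4) bp(4)]
  obtain n :: nat where n: "1 \<le> n" "n \<le> 3" "(p \<otimes> q) [^] n = \<one>"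
    using T pD qD unfolding three_transposition_group_def by blast
  have "n = 1 \<or> n = 2 \<or> n = 3" using n by auto
  moreover have "n \<noteq> 1"
  proof
    assume "n = 1"
    then have "p \<otimes> q = \<one>" using n(3) bp(2) bq(2) by simp
    then show False using f(6) pq by auto
  qed
  moreover have "n \<noteq> 2"
  proof
    assume "n = 2"
    then have "p \<otimes> q \<otimes> (p \<otimes> q) = \<one>" using n(3) bp(2) bq(2) by (simp add: numeral_2_eq_2)
    then show False using f(5) ncm by auto
  qed
  ultimately have "n = 3" by blast
  then have o3: "p \<otimes> q \<otimes> (p \<otimes> q) \<otimes> (p \<otimes> q) = \<one>" using n(3) bp bq
    by (simp add: numeral_3_eq_3 nat_pow_Suc2 m_assoc)
  define H where "H = {\<one>, p, q, p \<otimes> q, q \<otimes> p, p \<otimes> q \<otimes> p}"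
  have sH: "subgroup H G \<and> G\<lparr>carrier := H\<rparr> \<cong> sym_group 3"
    unfolding H_def by (rule s3_subgroup[OF bp(2) bq(2) bp(4) bq(4) bp(3) bq(3) ncm o3])
  have br: "q \<otimes> p \<otimes> q = p \<otimes> q \<otimes> p" by (rule s3_braid[OF bp(2) bq(2) bp(4) bq(4) o3])
  have dist: "distinct [\<one>, p, q, p \<otimes> q, q \<otimes> p, p \<otimes> q \<otimes> p]"
    by (rule s3_distinct[OF bp(2) bq(2) bp(4) bq(4) bp(3) bq(3) ncm br])
  have x1: "p \<otimes> q \<otimes> (p \<otimes> q) \<noteq> \<one>" using f(5) ncm by blast
  have x2: "q \<otimes> p \<otimes> (q \<otimes> p) \<noteq> \<one>" using f'(5) ncm by metis
  have x3: "p \<otimes> q \<otimes> p \<otimes> (p \<otimes> q \<otimes> p) = \<one>" by (rule f(1))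
  have x4: "\<one> \<noteq> p \<otimes> q \<otimes> p" "p \<noteq> p \<otimes> q \<otimes> p" "q \<noteq> p \<otimes> q \<otimes> p"
    using dist by simp_all
  have inv: "involutions_in G H = {p, q, p \<otimes> q \<otimes> p}"
    unfolding H_def involutions_in_def
    using x1 x2 x3 x4 bp(3,4) bq(3,4) by blast
  have pqpD: "p \<otimes> q \<otimes> p \<in> D"
  proof -
    obtain d where d: "d \<in> carrier G" "D = {inv g \<otimes> d \<otimes> g | g. g \<in> carrier G}"
      using T unfolding three_transposition_group_def by blast
    obtain g where g: "g \<in> carrier G" "q = inv g \<otimes> d \<otimes> g" using qD d(2) by blast
    have "p \<otimes> q \<otimes> p = inv (g \<otimes> p) \<otimes> d \<otimes> (g \<otimes> p)"
      using g d(1) bp f(7) by (simp add: inv_mult_group m_assoc)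
    then show ?thesis using d(2) g(1) bp(2) by auto
  qed
  have "fischer_line G D {p, q, p \<otimes> q \<otimes> p}"
  proof -
    have c: "card {p, q, p \<otimes> q \<otimes> p} = 3" using pq x4 by simp
    have "{p, q, p \<otimes> q \<otimes> p} \<subseteq> D" using pD qD pqpD by blast
    then show ?thesis unfolding fischer_line_def using c sH inv[symmetric] by blast
  qed
  then have "fischer_collinear G D p q" using pq unfolding fischer_collinear_def by blast
  then show False using nc by simp
qed


lemma key_point:
  assumes T: "three_transposition_group G D" and vD: "v \<in> D" and wD: "w \<in> D" and xD: "x \<in> D"
    and vx: "v \<noteq> x" and wx: "w \<noteq> x"
    and nv: "\<not> fischer_collinear G D v x" and nw: "\<not> fischer_collinear G D w x"
  shows "v \<otimes>\<^bsub>G\<^esub> w \<otimes>\<^bsub>G\<^esub> v \<noteq> x"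
    "\<not> fischer_collinear G D (v \<otimes>\<^bsub>G\<^esub> w \<otimes>\<^bsub>G\<^esub> v) x"
proof -
  note bv = ttg_basic[OF T vD] and bw = ttg_basic[OF T wD] and bx = ttg_basic[OF T xD]
  have cv: "v \<otimes> x = x \<otimes> v" by (rule noncol_comm[OF T vD xD vx nv])
  have cw: "w \<otimes> x = x \<otimes> w" by (rule noncol_comm[OF T wD xD wx nw])
  have cu: "v \<otimes> w \<otimes> v \<otimes> x = x \<otimes> (v \<otimes> w \<otimes> v)"
  proof -
    have "v \<otimes> w \<otimes> v \<otimes> x = v \<otimes> (w \<otimes> (v \<otimes> x))" using bv bw bx by (simp add: m_assoc)
    also have "\<dots> = v \<otimes> (w \<otimes> x \<otimes> v)" using cv bv bw bx by (simp add: m_assoc)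
    also have "\<dots> = v \<otimes> (x \<otimes> w \<otimes> v)" using cw by simp
    also have "\<dots> = v \<otimes> x \<otimes> (w \<otimes> v)" using bv bw bx by (simp add: m_assoc)
    also have "\<dots> = x \<otimes> v \<otimes> (w \<otimes> v)" using cv by simp
    finally show ?thesis using bv bw bx by (simp add: m_assoc)
  qed
  show ne: "v \<otimes> w \<otimes> v \<noteq> x"
  proof
    assume e: "v \<otimes> w \<otimes> v = x"
    have "v \<otimes> w \<otimes> v = x \<otimes> v \<otimes> v" using e bx bv by (simp add: m_assoc)
    also have "\<dots> = v \<otimes> x \<otimes> v" using cv by simp
    finally have "w = x" using bv bw bx by (simp add: m_assoc)
    then show False using wx by simp
  qed
  show "\<not> fischer_collinear G D (v \<otimes> w \<otimes> v) x"
  proof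
    assume "fischer_collinear G D (v \<otimes> w \<otimes> v) x"
    then obtain L where L: "fischer_line G D L" "v \<otimes> w \<otimes> v \<in> L" "x \<in> L"
      unfolding fischer_collinear_def by blast
    show False using line_facts(1)[OF T L ne] cu by simp
  qed
qed

end

theorem proposition5p23:
  fixes G :: "('a, 'b) monoid_scheme" and D :: "'a set" and a b c v w :: 'a
  assumes "three_transposition_group G D"
    and "fischer_line G D {a, b, c}"
    and "v \<in> {p \<in> D. p \<notin> {a, b, c} \<and> \<not> fischer_collinear G D p a
                 \<and> \<not> fischer_collinear G D p b \<and> \<not> fischer_collinear G D p c}"
    and "w \<in> {p \<in> D. p \<notin> {a, b, c} \<and> \<not> fischer_collinear G D p a
                 \<and> \<not> fischer_collinear G D p b \<and> \<not> fischer_collinear G D p c}"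
    and "fischer_collinear G D v w"
  shows "fischer_wedge G D v w \<in> {p \<in> D. p \<notin> {a, b, c} \<and> \<not> fischer_collinear G D p a
                 \<and> \<not> fischer_collinear G D p b \<and> \<not> fischer_collinear G D p c}"
proof -
  note T = assms(1)
  have abcD: "a \<in> D" "b \<in> D" "c \<in> D" using assms(2) unfolding fischer_line_def by auto
  have grp: "group G" using T unfolding three_transposition_group_def by blast
  note we = group.wedge_eq[OF grp T assms(5)]
  have vD: "v \<in> D" and wD: "w \<in> D" using assms(3,4) by auto
  note ka = group.key_point[OF grp T vD wD abcD(1)] and kb = group.key_point[OF grp T vD wD abcD(2)]
    and kc = group.key_point[OF grp T vD wD abcD(3)]
  show ?thesis using we ka kb kc assms(3,4) by auto
qed


end
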